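(* Assume the standing setup, let $(\hat\sigma,\varphi)$ be fine and let $\nu,\lambda$ be the fixed conformal measure. Then for every finite set $D\subset E$ and every integer $n\ge0$ there exists $\beta=\beta_{D,n}>0$ such that $$\nu_x([\omega]_x)\ge\beta$$ for every integer $0\le k\le n$, every word $\omega\in D_x^k$ and $m$-a.e. $x\in X$.
   Context: Standing setup. $(X,\mathcal F,m)$ is a complete probability space and $\theta:X\to X$ an invertible measurable $m$-preserving map. $E=\mathbb N$, and $x\mapsto A(x)=(A_{ij}(x))_{i,j\in E}$ is a measurable map into $\{0,1\}$-matrices. $E_x^n$ is the set of words $\omega_0\cdots\omega_n\in E^{n+1}$ with $A_{\omega_i\omega_{i+1}}(\theta^i(x))=1$ for $0\le i\le n-1$; for $D\subset E$, $D_x^n$ is the set of words in $E_x^n$ with all letters in $D$; $E_x^\infty$ is the set of $\omega\in E^{\mathbb N}$ with $A_{\omega_i\omega_{i+1}}(\theta^i(x))=1$ for all $i$. For $\omega\in E_x^n$, $[\omega]_x=\{\tau\in E_x^\infty:\tau_0\cdots\tau_n=\omega\}$; $[F]_x=\{\tau\in E_x^\infty:\tau_0\in F\}$, $[0,\dots,l]_x=[\{0,\dots,l\}]_x$; complements in $E_x^\infty$. Metric $d(\omega,\tau)=e^{-\min\{n:\omega_n\ne\tau_n\}}$. $\sigma_x:E_x^\infty\to E_{\theta(x)}^\infty$ the shift, $\Omega=\bigcup_x\{x\}\times E_x^\infty$, $\hat\sigma(x,\omega)=(\theta(x),\sigma_x\omega)$, $\varphi_x=\varphi(x,\cdot)$.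 $\hat\sigma$ is topologically mixing: for all $a,b\in E$ there is $N$ such that for all $n\ge N$ and all $x$ there is a word $\omega$ of length $n+1$ with $a\omega b\in E_x^{n+2}$. Fix $\alpha>0$; $v_\alpha(g)=\sup\{|g(\tau)-g(\omega)|/d(\tau,\omega)^\alpha:\tau\ne\omega,\tau_0=\omega_0\}$. Summable potential: measurable $\varphi:\Omega\to\mathbb R$, $\varphi_x$ continuous, $\operatorname{ess\,sup}_xv_\alpha(\varphi_x)<\infty$, for each $e$ constants $0<c_e<C_e$ with $c_e\le e^{\varphi_x}\le C_e$ on $[e]_x$ a.e., and $\lim_{l\to\infty}\operatorname{ess\,sup}_x\sup\mathcal L_x(1_{[0,\dots,l]_x^c})=0$, where $\mathcal L_xg(\omega)=\sum_{e:\,A_{e\omega_0}(x)=1}g(e\omega)e^{\varphi_x(e\omega)}$, $\omega\in E_{\theta(x)}^\infty$. (A): for each $e$ some $M_e>0$ with $M_e^{-1}\le\mathcal L_x1$ on $[e]_{\theta(x)}$ a.e.; (B): $\lim_{e\to\infty}\operatorname{ess\,sup}_x\sup_{[e]_{\theta(x)}}\mathcal L_x1=0$; (C): there are $0<\kappa<1/4$ and finite $F\subset E$ with $\sup\mathcal L_x(1_{E_x^\infty\setminus[F]_x})\le\kappa\inf_{[F]_{\theta(x)}}\mathcal L_x1$ a.e. Fine: $\varphi$ summable and (A),(B),(C). Random measures: probability measures on $\Omega$ with marginal $m$ and disintegrations $\nu_x$ (probabilities on $E_x^\infty$). Fixed conformal measure: a random measure $\nu$ with a measurable $\lambda:X\to(0,\infty)$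 such that $\int\mathcal L_xg\,d\nu_{\theta(x)}=\lambda_x\int g\,d\nu_x$ for all bounded continuous $g$ on $E_x^\infty$ and a.e. $x$, with $\operatorname{ess\,sup}|\log\lambda|<\infty$ and $\nu_x([F]_x)\ge1/2$ for a.e. $x$, $F$ being the set from (C) (the conformal measure constructed in the paper has these properties). *)

theory Defs
  imports "HOL-Analysis.Analysis" "HOL-Probability.Probability"
begin

text \<open>Alphabet E = nat; a random 0/1 transition matrix is a predicate A x i j
  (A x i j = True means A_ij(x) = 1). Words are lists; one-sided sequences are nat => nat.\<close>

definition adm_word :: "('a \<Rightarrow> nat \<Rightarrow> nat \<Rightarrow> bool) \<Rightarrow> ('a \<Rightarrow> 'a) \<Rightarrow> 'a \<Rightarrow> nat list \<Rightarrow> bool" where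
  "adm_word A \<theta> x w \<longleftrightarrow> (\<forall>i. Suc i < length w \<longrightarrow> A ((\<theta> ^^ i) x) (w ! i) (w ! Suc i))"

definition Ewords :: "('a \<Rightarrow> nat \<Rightarrow> nat \<Rightarrow> bool) \<Rightarrow> ('a \<Rightarrow> 'a) \<Rightarrow> 'a \<Rightarrow> nat \<Rightarrow> nat list set" where
  "Ewords A \<theta> x n = {w. length w = Suc n \<and> adm_word A \<theta> x w}"

definition Dwords :: "nat set \<Rightarrow> ('a \<Rightarrow> nat \<Rightarrow> nat \<Rightarrow> bool) \<Rightarrow> ('a \<Rightarrow> 'a) \<Rightarrow> 'a \<Rightarrow> nat \<Rightarrow> nat list set" where
  "Dwords D A \<theta> x n = {w \<in> Ewords A \<theta> x n. set w \<subseteq> D}"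

definition Einf :: "('a \<Rightarrow> nat \<Rightarrow> nat \<Rightarrow> bool) \<Rightarrow> ('a \<Rightarrow> 'a) \<Rightarrow> 'a \<Rightarrow> (nat \<Rightarrow> nat) set" where
  "Einf A \<theta> x = {\<omega>. \<forall>i. A ((\<theta> ^^ i) x) (\<omega> i) (\<omega> (Suc i))}"

definition cyl :: "('a \<Rightarrow> nat \<Rightarrow> nat \<Rightarrow> bool) \<Rightarrow> ('a \<Rightarrow> 'a) \<Rightarrow> 'a \<Rightarrow> nat list \<Rightarrow> (nat \<Rightarrow> nat) set" where
  "cyl A \<theta> x w = {\<tau> \<in> Einf A \<theta> x. \<forall>i < length w. \<tau> i = w ! i}"

definition cylset :: "('a \<Rightarrow> nat \<Rightarrow> nat \<Rightarrow> bool) \<Rightarrow> ('a \<Rightarrow> 'a) \<Rightarrow> 'a \<Rightarrow> nat set \<Rightarrow> (nat \<Rightarrow> nat) set" where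
  "cylset A \<theta> x F = {\<tau> \<in> Einf A \<theta> x. \<tau> 0 \<in> F}"

definition dseq :: "(nat \<Rightarrow> nat) \<Rightarrow> (nat \<Rightarrow> nat) \<Rightarrow> real" where
  "dseq \<omega> \<tau> = (if \<omega> = \<tau> then 0 else exp (- real (LEAST n. \<omega> n \<noteq> \<tau> n)))"

definition d_continuous_on :: "(nat \<Rightarrow> nat) set \<Rightarrow> ((nat \<Rightarrow> nat) \<Rightarrow> real) \<Rightarrow> bool" where
  "d_continuous_on S f \<longleftrightarrow>
     (\<forall>\<omega>\<in>S. \<forall>\<epsilon>>0. \<exists>\<delta>>0. \<forall>\<tau>\<in>S. dseq \<tau> \<omega> < \<delta> \<longrightarrow> \<bar>f \<tau> - f \<omega>\<bar> < \<epsilon>)"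

definition scons :: "nat \<Rightarrow> (nat \<Rightarrow> nat) \<Rightarrow> (nat \<Rightarrow> nat)" where
  "scons e \<omega> = case_nat e \<omega>"

definition Lop :: "('a \<Rightarrow> nat \<Rightarrow> nat \<Rightarrow> bool) \<Rightarrow> ('a \<Rightarrow> (nat \<Rightarrow> nat) \<Rightarrow> real) \<Rightarrow> 'a
     \<Rightarrow> ((nat \<Rightarrow> nat) \<Rightarrow> real) \<Rightarrow> (nat \<Rightarrow> nat) \<Rightarrow> real" where
  "Lop A \<phi> x g \<omega> = (\<Sum>e. if A x e (\<omega> 0) then g (scons e \<omega>) * exp (\<phi> x (scons e \<omega>)) else 0)"

text \<open>The same operator applied to nonnegative (extended) functions; the value may be infinite,
  so bounds on it also assert convergence.\<close>
definition LopE :: "('a \<Rightarrow> nat \<Rightarrow> nat \<Rightarrow> bool) \<Rightarrow> ('a \<Rightarrow> (nat \<Rightarrow> nat) \<Rightarrow> real) \<Rightarrow> 'a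
     \<Rightarrow> ((nat \<Rightarrow> nat) \<Rightarrow> ennreal) \<Rightarrow> (nat \<Rightarrow> nat) \<Rightarrow> ennreal" where
  "LopE A \<phi> x g \<omega> = (\<Sum>e. if A x e (\<omega> 0) then g (scons e \<omega>) * ennreal (exp (\<phi> x (scons e \<omega>))) else 0)"

abbreviation SeqS :: "(nat \<Rightarrow> nat) measure" where
  "SeqS \<equiv> PiM UNIV (\<lambda>_. count_space UNIV)"

definition top_mixing :: "('a \<Rightarrow> nat \<Rightarrow> nat \<Rightarrow> bool) \<Rightarrow> ('a \<Rightarrow> 'a) \<Rightarrow> bool" where
  "top_mixing A \<theta> \<longleftrightarrow> (\<forall>a b. \<exists>N. \<forall>n\<ge>N. \<forall>x.
      \<exists>w. length w = Suc n \<and> a # w @ [b] \<in> Ewords A \<theta> x (Suc (Suc n)))"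

definition summable_potential :: "'a measure \<Rightarrow> ('a \<Rightarrow> nat \<Rightarrow> nat \<Rightarrow> bool) \<Rightarrow> ('a \<Rightarrow> 'a)
     \<Rightarrow> real \<Rightarrow> ('a \<Rightarrow> (nat \<Rightarrow> nat) \<Rightarrow> real) \<Rightarrow> bool" where
  "summable_potential M A \<theta> \<alpha> \<phi> \<longleftrightarrow>
     (\<lambda>p. \<phi> (fst p) (snd p)) \<in> borel_measurable
        (restrict_space (M \<Otimes>\<^sub>M SeqS) (SIGMA x:space M. Einf A \<theta> x))
   \<and> (\<forall>x\<in>space M. d_continuous_on (Einf A \<theta> x) (\<phi> x))
   \<and> (\<exists>C. (AE x in M. \<forall>\<tau>\<in>Einf A \<theta> x. \<forall>\<omega>\<in>Einf A \<theta> x. \<tau> \<noteq> \<omega> \<longrightarrow> \<tau> 0 = \<omega> 0 \<longrightarrow>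
          \<bar>\<phi> x \<tau> - \<phi> x \<omega>\<bar> \<le> C * dseq \<tau> \<omega> powr \<alpha>))
   \<and> (\<forall>e. \<exists>c C. 0 < c \<and> c < C \<and> (AE x in M. \<forall>\<omega>\<in>cyl A \<theta> x [e].
          c \<le> exp (\<phi> x \<omega>) \<and> exp (\<phi> x \<omega>) \<le> C))
   \<and> (\<forall>\<epsilon>>0. \<exists>l0. \<forall>l\<ge>l0. (AE x in M. \<forall>\<omega>\<in>Einf A \<theta> (\<theta> x).
          LopE A \<phi> x (indicator (Einf A \<theta> x - cylset A \<theta> x {0..l})) \<omega> \<le> ennreal \<epsilon>))"

text \<open>Fine: summable plus (A), (B), (C) with the given kappa and F.\<close>
definition fine_potential :: "'a measure \<Rightarrow> ('a \<Rightarrow> nat \<Rightarrow> nat \<Rightarrow> bool) \<Rightarrow> ('a \<Rightarrow> 'a)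
     \<Rightarrow> real \<Rightarrow> ('a \<Rightarrow> (nat \<Rightarrow> nat) \<Rightarrow> real) \<Rightarrow> real \<Rightarrow> nat set \<Rightarrow> bool" where
  "fine_potential M A \<theta> \<alpha> \<phi> \<kappa> F \<longleftrightarrow>
     summable_potential M A \<theta> \<alpha> \<phi>
   \<and> (\<forall>e. \<exists>Me>0. (AE x in M. \<forall>\<omega>\<in>cyl A \<theta> (\<theta> x) [e].
          ennreal (1 / Me) \<le> LopE A \<phi> x (\<lambda>_. 1) \<omega>))
   \<and> (\<forall>\<epsilon>>0. \<exists>e0. \<forall>e\<ge>e0. (AE x in M. \<forall>\<omega>\<in>cyl A \<theta> (\<theta> x) [e].
          LopE A \<phi> x (\<lambda>_. 1) \<omega> \<le> ennreal \<epsilon>))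
   \<and> 0 < \<kappa> \<and> \<kappa> < 1/4 \<and> finite F
   \<and> (AE x in M. \<forall>\<omega>\<in>Einf A \<theta> (\<theta> x). \<forall>\<omega>'\<in>cylset A \<theta> (\<theta> x) F.
          LopE A \<phi> x (indicator (Einf A \<theta> x - cylset A \<theta> x F)) \<omega>
            \<le> ennreal \<kappa> * LopE A \<phi> x (\<lambda>_. 1) \<omega>')"

definition fixed_conformal :: "'a measure \<Rightarrow> ('a \<Rightarrow> nat \<Rightarrow> nat \<Rightarrow> bool) \<Rightarrow> ('a \<Rightarrow> 'a)
     \<Rightarrow> ('a \<Rightarrow> (nat \<Rightarrow> nat) \<Rightarrow> real) \<Rightarrow> nat set
     \<Rightarrow> ('a \<Rightarrow> (nat \<Rightarrow> nat) measure) \<Rightarrow> ('a \<Rightarrow> real) \<Rightarrow> bool" where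
  "fixed_conformal M A \<theta> \<phi> F \<nu> lam \<longleftrightarrow>
     (\<forall>x\<in>space M. prob_space (\<nu> x) \<and> sets (\<nu> x) = sets SeqS
        \<and> emeasure (\<nu> x) (Einf A \<theta> x) = 1)
   \<and> (\<forall>B\<in>sets SeqS. (\<lambda>x. emeasure (\<nu> x) B) \<in> borel_measurable M)
   \<and> lam \<in> borel_measurable M \<and> (\<forall>x\<in>space M. 0 < lam x)
   \<and> (\<exists>C. (AE x in M. \<bar>ln (lam x)\<bar> \<le> C))
   \<and> (AE x in M. \<forall>g. (\<exists>B. \<forall>\<omega>\<in>Einf A \<theta> x. \<bar>g \<omega>\<bar> \<le> B) \<longrightarrow> d_continuous_on (Einf A \<theta> x) g \<longrightarrow>
        (LINT \<omega>:Einf A \<theta> (\<theta> x)|\<nu> (\<theta> x). Lop A \<phi> x g \<omega>)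
          = lam x * (LINT \<omega>:Einf A \<theta> x|\<nu> x. g \<omega>))
   \<and> (AE x in M. measure (\<nu> x) (cylset A \<theta> x F) \<ge> 1/2)"

end

theory Submission
  imports Defs
begin

lemma sets_Einf: "Einf A \<theta> y \<in> sets SeqS"
proof -
  have "Einf A \<theta> y = (\<Inter>i. {\<omega>\<in>space SeqS. A ((\<theta>^^i) y) (\<omega> i) (\<omega> (Suc i))})" by (auto simp: Einf_def space_PiM)
  also have "\<dots> \<in> sets SeqS" by measurable
  finally show ?thesis .
qed

lemma sets_cyl: "cyl A \<theta> y w \<in> sets SeqS"
proof -
  have "cyl A \<theta> y w = Einf A \<theta> y \<inter> {\<omega>\<in>space SeqS. \<forall>i\<in>{..<length w}. \<omega> i = w ! i}"
    by (auto simp: cyl_def space_PiM)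
  also have "\<dots> \<in> sets SeqS" by (intro sets.Int sets_Einf) measurable
  finally show ?thesis .
qed

lemma sets_cylset: "cylset A \<theta> y F \<in> sets SeqS"
proof -
  have "cylset A \<theta> y F = Einf A \<theta> y \<inter> {\<omega>\<in>space SeqS. \<omega> 0 \<in> F}"
    by (auto simp: cylset_def space_PiM)
  also have "\<dots> \<in> sets SeqS" using sets_Einf by measurable
  finally show ?thesis .
qed

lemma cyl_sub: "cyl A \<theta> y w \<subseteq> Einf A \<theta> y" by (auto simp: cyl_def)

lemma scons_Einf: "scons e \<omega> \<in> Einf A \<theta> x \<longleftrightarrow> A x e (\<omega> 0) \<and> \<omega> \<in> Einf A \<theta> (\<theta> x)"
proof
  assume h: "scons e \<omega> \<in> Einf A \<theta> x"
  have "A x e (\<omega> 0)" using h[unfolded Einf_def, simplified, rule_format, of 0] by (simp add: scons_def)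
  moreover have "\<omega> \<in> Einf A \<theta> (\<theta> x)"
  proof -
    { fix j have "A ((\<theta>^^j) (\<theta> x)) (\<omega> j) (\<omega> (Suc j))"
        using h[unfolded Einf_def, simplified, rule_format, of "Suc j"]
        by (simp add: scons_def funpow_Suc_right del: funpow.simps) }
    then show ?thesis by (simp add: Einf_def)
  qed
  ultimately show "A x e (\<omega> 0) \<and> \<omega> \<in> Einf A \<theta> (\<theta> x)" by blast
next
  assume h: "A x e (\<omega> 0) \<and> \<omega> \<in> Einf A \<theta> (\<theta> x)"
  { fix i have "A ((\<theta>^^i) x) (scons e \<omega> i) (scons e \<omega> (Suc i))"
    proof (cases i)
      case 0 then show ?thesis using h by (simp add: scons_def)
    next
      case (Suc j) then show ?thesis using h
        by (simp add: scons_def Einf_def funpow_Suc_right del: funpow.simps)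
    qed }
  then show "scons e \<omega> \<in> Einf A \<theta> x" by (simp add: Einf_def)
qed

lemma scons_cyl: "scons e \<omega> \<in> cyl A \<theta> x (a # v) \<longleftrightarrow>
   A x e (\<omega> 0) \<and> \<omega> \<in> Einf A \<theta> (\<theta> x) \<and> e = a \<and> \<omega> \<in> cyl A \<theta> (\<theta> x) v"
proof -
  have "(\<forall>i<length (a#v). scons e \<omega> i = (a#v) ! i) \<longleftrightarrow> e = a \<and> (\<forall>i<length v. \<omega> i = v ! i)"
    by (auto simp: scons_def less_Suc_eq_0_disj)
  then show ?thesis by (auto simp: cyl_def scons_Einf)
qed

lemma dseq_agree:
  assumes "dseq \<tau> \<omega> < exp (- real n)" "i \<le> n" shows "\<tau> i = \<omega> i"
proof (rule ccontr)
  assume ne: "\<tau> i \<noteq> \<omega> i"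
  then have "\<tau> \<noteq> \<omega>" by auto
  have "(LEAST m. \<tau> m \<noteq> \<omega> m) \<le> i" using ne by (rule Least_le)
  then have "exp (- real n) \<le> exp (- real (LEAST m. \<tau> m \<noteq> \<omega> m))" using assms(2) by simp
  then show False using assms(1) \<open>\<tau> \<noteq> \<omega>\<close> by (simp add: dseq_def)
qed

lemma dcont_exp_neg:
  assumes "d_continuous_on S f" shows "d_continuous_on S (\<lambda>\<tau>. 1 / exp (f \<tau>))"
  unfolding d_continuous_on_def
proof (intro ballI allI impI)
  fix \<omega> and \<epsilon>::real assume w: "\<omega> \<in> S" and e: "\<epsilon> > 0"
  have "isCont (\<lambda>s::real. 1 / exp s) (f \<omega>)" by (intro continuous_intros) auto
  then obtain \<eta> where eta: "\<eta> > 0" "\<And>s. dist s (f \<omega>) < \<eta> \<Longrightarrow> dist (1/exp s) (1/exp (f \<omega>)) < \<epsilon>"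
    using e unfolding continuous_at_eps_delta by blast
  obtain \<delta> where d: "\<delta> > 0" "\<forall>\<tau>\<in>S. dseq \<tau> \<omega> < \<delta> \<longrightarrow> \<bar>f \<tau> - f \<omega>\<bar> < \<eta>"
    using assms w eta(1) unfolding d_continuous_on_def by blast
  show "\<exists>\<delta>>0. \<forall>\<tau>\<in>S. dseq \<tau> \<omega> < \<delta> \<longrightarrow> \<bar>1 / exp (f \<tau>) - 1 / exp (f \<omega>)\<bar> < \<epsilon>"
    using d eta(2) by (metis dist_real_def)
qed

lemma dcont_ind_mult:
  assumes "d_continuous_on (Einf A \<theta> x) f"
  shows "d_continuous_on (Einf A \<theta> x) (\<lambda>\<tau>. indicator (cyl A \<theta> x w) \<tau> * f \<tau>)"
  unfolding d_continuous_on_def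
proof (intro ballI allI impI)
  fix \<omega> and \<epsilon>::real assume w: "\<omega> \<in> Einf A \<theta> x" and e: "\<epsilon> > 0"
  obtain \<delta> where d: "\<delta> > 0" "\<forall>\<tau>\<in>Einf A \<theta> x. dseq \<tau> \<omega> < \<delta> \<longrightarrow> \<bar>f \<tau> - f \<omega>\<bar> < \<epsilon>"
    using assms w e unfolding d_continuous_on_def by blast
  show "\<exists>\<delta>>0. \<forall>\<tau>\<in>Einf A \<theta> x. dseq \<tau> \<omega> < \<delta> \<longrightarrow>
     \<bar>indicator (cyl A \<theta> x w) \<tau> * f \<tau> - indicator (cyl A \<theta> x w) \<omega> * f \<omega>\<bar> < \<epsilon>"
  proof (intro exI[of _ "min \<delta> (exp (- real (length w)))"] conjI ballI impI)
    show "0 < min \<delta> (exp (- real (length w)))" using d by simp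
    fix \<tau> assume t: "\<tau> \<in> Einf A \<theta> x" and dl: "dseq \<tau> \<omega> < min \<delta> (exp (- real (length w)))"
    have ag: "\<And>i. i < length w \<Longrightarrow> \<tau> i = \<omega> i" using dl by (intro dseq_agree[of _ _ "length w"]) auto
    have "\<tau> \<in> cyl A \<theta> x w \<longleftrightarrow> \<omega> \<in> cyl A \<theta> x w" using t w ag by (auto simp: cyl_def)
    then show "\<bar>indicator (cyl A \<theta> x w) \<tau> * f \<tau> - indicator (cyl A \<theta> x w) \<omega> * f \<omega>\<bar> < \<epsilon>"
      using d t dl e by (auto simp: indicator_def)
  qed
qed

lemma one_step:
  assumes px: "prob_space (\<nu> x)" "sets (\<nu> x) = sets SeqS"
    and ptx: "prob_space (\<nu> (\<theta> x))" "sets (\<nu> (\<theta> x)) = sets SeqS"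
    and conf: "\<forall>g. (\<exists>B. \<forall>\<omega>\<in>Einf A \<theta> x. \<bar>g \<omega>\<bar> \<le> B) \<longrightarrow> d_continuous_on (Einf A \<theta> x) g \<longrightarrow>
        (LINT \<omega>:Einf A \<theta> (\<theta> x)|\<nu> (\<theta> x). Lop A \<phi> x g \<omega>)
          = lam x * (LINT \<omega>:Einf A \<theta> x|\<nu> x. g \<omega>)"
    and cb: "\<forall>\<omega>\<in>cyl A \<theta> x [a]. c \<le> exp (\<phi> x \<omega>)" and c: "c > 0" and lp: "lam x > 0"
    and cont: "d_continuous_on (Einf A \<theta> x) (\<phi> x)"
    and v: "v \<noteq> []" "A x a (hd v)"
  shows "c / lam x * measure (\<nu> (\<theta> x)) (cyl A \<theta> (\<theta> x) v) \<le> measure (\<nu> x) (cyl A \<theta> x (a # v))"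
proof -
  define g where "g = (\<lambda>\<tau>. indicator (cyl A \<theta> x (a # v)) \<tau> * (1 / exp (\<phi> x \<tau>)))"
  have cyl1: "cyl A \<theta> x (a # v) \<subseteq> cyl A \<theta> x [a]" by (auto simp: cyl_def)
  have gle: "g \<tau> \<le> indicator (cyl A \<theta> x (a # v)) \<tau> / c" for \<tau>
  proof (cases "\<tau> \<in> cyl A \<theta> x (a # v)")
    case True
    then have "c \<le> exp (\<phi> x \<tau>)" using cb cyl1 by auto
    then have "1 / exp (\<phi> x \<tau>) \<le> 1 / c" using c by (simp add: frac_le)
    then show ?thesis using True by (simp add: g_def)
  qed (simp add: g_def)
  have g0: "0 \<le> g \<tau>" for \<tau> by (simp add: g_def)
  have bd: "\<exists>B. \<forall>\<omega>\<in>Einf A \<theta> x. \<bar>g \<omega>\<bar> \<le> B"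
  proof (intro exI[of _ "1/c"] ballI)
    fix \<omega> show "\<bar>g \<omega>\<bar> \<le> 1 / c" using gle[of \<omega>] g0[of \<omega>] c
      by (cases "\<omega> \<in> cyl A \<theta> x (a # v)") auto
  qed
  have gc: "d_continuous_on (Einf A \<theta> x) g"
    unfolding g_def by (intro dcont_ind_mult dcont_exp_neg cont)
  have Lg: "Lop A \<phi> x g \<omega> = indicator (cyl A \<theta> (\<theta> x) v) \<omega>" if w: "\<omega> \<in> Einf A \<theta> (\<theta> x)" for \<omega>
  proof -
    have "(\<lambda>e. if A x e (\<omega> 0) then g (scons e \<omega>) * exp (\<phi> x (scons e \<omega>)) else 0)
        = (\<lambda>e. if e = a then indicator (cyl A \<theta> (\<theta> x) v) \<omega> else 0)"
    proof
      fix e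
      have om0: "\<omega> \<in> cyl A \<theta> (\<theta> x) v \<Longrightarrow> \<omega> 0 = hd v" using v(1)
        by (cases v) (auto simp: cyl_def)
      show "(if A x e (\<omega> 0) then g (scons e \<omega>) * exp (\<phi> x (scons e \<omega>)) else 0)
          = (if e = a then indicator (cyl A \<theta> (\<theta> x) v) \<omega> else 0)"
        using w v(2) om0 by (auto simp: g_def scons_cyl indicator_def)
    qed
    then show ?thesis unfolding Lop_def using sums_unique[OF sums_single[of a "\<lambda>_. indicator (cyl A \<theta> (\<theta> x) v) \<omega> :: real"]]
      by simp
  qed
  have "(LINT \<omega>:Einf A \<theta> (\<theta> x)|\<nu> (\<theta> x). Lop A \<phi> x g \<omega>) = (LINT \<omega>|\<nu> (\<theta> x). indicator (cyl A \<theta> (\<theta> x) v) \<omega>)"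
    unfolding set_lebesgue_integral_def
    by (intro Bochner_Integration.integral_cong refl) (auto simp: Lg indicator_def cyl_def)
  also have "\<dots> = measure (\<nu> (\<theta> x)) (cyl A \<theta> (\<theta> x) v)"
    using ptx sets_cyl[of A \<theta> "\<theta> x" v] prob_space.finite_measure[OF ptx(1)]
    by (simp add: finite_measure.emeasure_finite integral_indicator)
  finally have eq: "measure (\<nu> (\<theta> x)) (cyl A \<theta> (\<theta> x) v) = lam x * (LINT \<omega>:Einf A \<theta> x|\<nu> x. g \<omega>)"
    using conf bd gc by auto
  have fin: "emeasure (\<nu> x) (cyl A \<theta> x (a # v)) < \<infinity>"
    using prob_space.finite_measure[OF px(1)] by (simp add: finite_measure.emeasure_finite less_top[symmetric])
  have sc: "cyl A \<theta> x (a # v) \<in> sets (\<nu> x)" using px(2) sets_cyl by simp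
  have intI: "integrable (\<nu> x) (\<lambda>\<omega>. indicator (cyl A \<theta> x (a # v)) \<omega> / c)"
    using fin sc by (intro integrable_divide) simp
  have "(LINT \<omega>:Einf A \<theta> x|\<nu> x. g \<omega>) = (LINT \<omega>|\<nu> x. indicator (Einf A \<theta> x) \<omega> *\<^sub>R g \<omega>)"
    by (simp add: set_lebesgue_integral_def)
  also have "\<dots> \<le> (LINT \<omega>|\<nu> x. indicator (cyl A \<theta> x (a # v)) \<omega> / c)"
  proof (cases "integrable (\<nu> x) (\<lambda>\<omega>. indicator (Einf A \<theta> x) \<omega> *\<^sub>R g \<omega>)")
    case True
    show ?thesis
    proof (rule integral_mono[OF True intI])
      fix \<omega> show "indicator (Einf A \<theta> x) \<omega> *\<^sub>R g \<omega> \<le> indicator (cyl A \<theta> x (a # v)) \<omega> / c"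
        using gle[of \<omega>] g0[of \<omega>] c by (cases "\<omega> \<in> Einf A \<theta> x") auto
    qed
  next
    case False
    then show ?thesis using c by (simp add: not_integrable_integral_eq)
  qed
  also have "\<dots> = measure (\<nu> x) (cyl A \<theta> x (a # v)) / c"
    using fin sc by simp
  finally show ?thesis using eq lp c by (simp add: field_simps)
qed

definition good_pt where
  "good_pt M A \<theta> \<phi> \<nu> lam cf y \<longleftrightarrow> y \<in> space M \<and> prob_space (\<nu> y) \<and> sets (\<nu> y) = sets SeqS
    \<and> (\<forall>g. (\<exists>B. \<forall>\<omega>\<in>Einf A \<theta> y. \<bar>g \<omega>\<bar> \<le> B) \<longrightarrow> d_continuous_on (Einf A \<theta> y) g \<longrightarrow>
        (LINT \<omega>:Einf A \<theta> (\<theta> y)|\<nu> (\<theta> y). Lop A \<phi> y g \<omega>)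
          = lam y * (LINT \<omega>:Einf A \<theta> y|\<nu> y. g \<omega>))
    \<and> (\<forall>e. \<forall>\<omega>\<in>cyl A \<theta> y [e]. cf e \<le> exp (\<phi> y \<omega>)) \<and> lam y > 0
    \<and> d_continuous_on (Einf A \<theta> y) (\<phi> y)"

lemma adm_cons: "adm_word A \<theta> x (a # v) \<longleftrightarrow> (v \<noteq> [] \<longrightarrow> A x a (hd v)) \<and> adm_word A \<theta> (\<theta> x) v"
proof -
  have "adm_word A \<theta> x (a # v) \<longleftrightarrow> (\<forall>i. Suc i < length (a#v) \<longrightarrow> A ((\<theta> ^^ i) x) ((a#v) ! i) ((a#v) ! Suc i))"
    by (simp add: adm_word_def)
  also have "\<dots> \<longleftrightarrow> (Suc 0 < length (a#v) \<longrightarrow> A x a (v ! 0)) \<and>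
      (\<forall>j. Suc (Suc j) < length (a#v) \<longrightarrow> A ((\<theta> ^^ Suc j) x) ((a#v) ! Suc j) ((a#v) ! Suc (Suc j)))"
    by (metis funpow_0 nth_Cons_0 nth_Cons_Suc not0_implies_Suc)
  also have "\<dots> \<longleftrightarrow> (v \<noteq> [] \<longrightarrow> A x a (hd v)) \<and> adm_word A \<theta> (\<theta> x) v"
    by (cases v) (auto simp: adm_word_def funpow_Suc_right simp del: funpow.simps)
  finally show ?thesis .
qed

lemma chain:
  assumes good: "\<forall>j. good_pt M A \<theta> \<phi> \<nu> lam cf ((\<theta>^^j) x)"
    and cfp: "\<forall>e. cf e > 0"
    and adm: "adm_word A \<theta> x u" and ne: "u \<noteq> []" and r: "r \<ge> 0"
    and rle: "\<forall>i. Suc i < length u \<longrightarrow> r \<le> cf (u!i) / lam ((\<theta>^^i) x)"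
  shows "r^(length u - 1) * measure (\<nu> ((\<theta>^^(length u - 1)) x)) (cyl A \<theta> ((\<theta>^^(length u - 1)) x) [last u])
     \<le> measure (\<nu> x) (cyl A \<theta> x u)"
  using good adm ne rle
proof (induction u arbitrary: x)
  case Nil then show ?case by simp
next
  case (Cons a v)
  show ?case
  proof (cases "v = []")
    case True then show ?thesis by simp
  next
    case False
    have g0: "good_pt M A \<theta> \<phi> \<nu> lam cf x" using Cons.prems(1)[rule_format, of 0] by simp
    have g1: "good_pt M A \<theta> \<phi> \<nu> lam cf (\<theta> x)" using Cons.prems(1)[rule_format, of 1] by simp
    have goodv: "\<forall>j. good_pt M A \<theta> \<phi> \<nu> lam cf ((\<theta>^^j) (\<theta> x))"
      using Cons.prems(1) by (metis funpow_Suc_right comp_apply)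
    have admv: "adm_word A \<theta> (\<theta> x) v" and ah: "A x a (hd v)" using Cons.prems(2) False by (auto simp: adm_cons)
    have rlev: "\<forall>i. Suc i < length v \<longrightarrow> r \<le> cf (v!i) / lam ((\<theta>^^i) (\<theta> x))"
    proof (intro allI impI)
      fix i assume "Suc i < length v"
      then have "r \<le> cf ((a#v)!Suc i) / lam ((\<theta>^^Suc i) x)" using Cons.prems(4)[rule_format, of "Suc i"] by simp
      then show "r \<le> cf (v!i) / lam ((\<theta>^^i) (\<theta> x))" by (simp add: funpow_swap1)
    qed
    have IH: "r^(length v - 1) * measure (\<nu> ((\<theta>^^(length v - 1)) (\<theta> x))) (cyl A \<theta> ((\<theta>^^(length v - 1)) (\<theta> x)) [last v])
       \<le> measure (\<nu> (\<theta> x)) (cyl A \<theta> (\<theta> x) v)"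
      using Cons.IH[OF goodv admv False rlev] .
    have ra: "r \<le> cf a / lam x" using Cons.prems(4) False by auto
    have os: "cf a / lam x * measure (\<nu> (\<theta> x)) (cyl A \<theta> (\<theta> x) v) \<le> measure (\<nu> x) (cyl A \<theta> x (a # v))"
      using g0 g1 cfp False ah unfolding good_pt_def
      by (intro one_step[where \<nu>=\<nu> and x=x and \<theta>=\<theta> and A=A and \<phi>=\<phi> and lam=lam and a=a and c="cf a" and v=v]) auto
    have eqi: "(\<theta>^^(length v - 1)) (\<theta> x) = (\<theta>^^(length (a#v) - 1)) x"
      using False by (cases v) (simp_all add: funpow_Suc_right del: funpow.simps)
    have "r^(length (a#v) - 1) * measure (\<nu> ((\<theta>^^(length (a#v) - 1)) x)) (cyl A \<theta> ((\<theta>^^(length (a#v) - 1)) x) [last (a#v)])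
      = r * (r^(length v - 1) * measure (\<nu> ((\<theta>^^(length v - 1)) (\<theta> x))) (cyl A \<theta> ((\<theta>^^(length v - 1)) (\<theta> x)) [last v]))"
      using False eqi by (cases v) simp_all
    also have "\<dots> \<le> (cf a / lam x) * measure (\<nu> (\<theta> x)) (cyl A \<theta> (\<theta> x) v)"
      using r ra by (intro mult_mono ra IH) auto
    also have "\<dots> \<le> measure (\<nu> x) (cyl A \<theta> x (a # v))" by (rule os)
    finally show ?thesis .
  qed
qed

lemma AE_shift:
  assumes "\<theta> \<in> M \<rightarrow>\<^sub>M M" "distr M M \<theta> = M" "AE x in M. P x"
  shows "AE x in M. P (\<theta> x)"
proof -
  obtain N where N: "{x\<in>space M. \<not> P x} \<subseteq> N" "emeasure M N = 0" "N \<in> sets M"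
    using assms(3) by (auto elim: AE_E)
  have "emeasure M (\<theta> -` N \<inter> space M) = emeasure (distr M M \<theta>) N"
    using assms(1) N(3) by (simp add: emeasure_distr)
  also have "\<dots> = 0" using assms(2) N(2) by simp
  finally have z: "emeasure M (\<theta> -` N \<inter> space M) = 0" .
  have s: "\<theta> -` N \<inter> space M \<in> sets M" using assms(1) N(3) by (rule measurable_sets)
  show ?thesis
  proof (rule AE_I')
    show "{x \<in> space M. \<not> P (\<theta> x)} \<subseteq> \<theta> -` N \<inter> space M"
      using N(1) measurable_space[OF assms(1)] by auto
  qed (use s z in auto)
qed

lemma AE_shift_pow:
  assumes "\<theta> \<in> M \<rightarrow>\<^sub>M M" "distr M M \<theta> = M" "AE x in M. P x"
  shows "AE x in M. P ((\<theta>^^j) x)"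
  using assms(3)
proof (induction j arbitrary: P)
  case 0 then show ?case by simp
next
  case (Suc j)
  have "AE x in M. P ((\<theta>^^j) x)" by (rule Suc.IH[OF Suc.prems])
  then have "AE x in M. P ((\<theta>^^j) (\<theta> x))" by (rule AE_shift[OF assms(1,2)])
  then show ?case by (simp add: funpow_swap1)
qed

lemma AE_shift_all:
  assumes "\<theta> \<in> M \<rightarrow>\<^sub>M M" "distr M M \<theta> = M" "AE x in M. P x"
  shows "AE x in M. \<forall>j. P ((\<theta>^^j) x)"
  using AE_shift_pow[OF assms] by (simp add: AE_all_countable)

lemma LopE_ge:
  assumes "A x a (\<omega> 0)"
  shows "ennreal (exp (\<phi> x (scons a \<omega>))) \<le> LopE A \<phi> x (\<lambda>_. 1) \<omega>"
proof -
  let ?f = "\<lambda>e. if A x e (\<omega> 0) then 1 * ennreal (exp (\<phi> x (scons e \<omega>))) else 0"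
  have "sum ?f {a} \<le> suminf ?f" by (intro sum_le_suminf) (auto intro: summableI)
  then show ?thesis using assms by (simp add: LopE_def)
qed

lemma adm_append:
  assumes "adm_word A \<theta> x (xs @ [a])" "adm_word A \<theta> ((\<theta>^^length xs) x) (a # ys)"
  shows "adm_word A \<theta> x (xs @ a # ys)"
  using assms
proof (induction xs arbitrary: x)
  case Nil then show ?case by simp
next
  case (Cons c xs)
  have h1: "adm_word A \<theta> (\<theta> x) (xs @ [a])" and h2: "A x c (hd (xs @ [a]))" using Cons.prems(1) by (auto simp: adm_cons)
  have h3: "adm_word A \<theta> ((\<theta>^^length xs) (\<theta> x)) (a # ys)" using Cons.prems(2) by (simp add: funpow_swap1)
  have "adm_word A \<theta> (\<theta> x) (xs @ a # ys)" by (rule Cons.IH[OF h1 h3])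
  moreover have "hd (xs @ a # ys) = hd (xs @ [a])" by (cases xs) auto
  ultimately show ?case using h2 by (simp add: adm_cons)
qed

lemma adm_drop:
  assumes "adm_word A \<theta> x u" shows "adm_word A \<theta> ((\<theta>^^j) x) (drop j u)"
  using assms
proof (induction u arbitrary: x j)
  case Nil then show ?case by (simp add: adm_word_def)
next
  case (Cons a v)
  show ?case
  proof (cases j)
    case 0 then show ?thesis using Cons.prems by simp
  next
    case (Suc i)
    have "adm_word A \<theta> (\<theta> x) v" using Cons.prems by (simp add: adm_cons)
    then have "adm_word A \<theta> ((\<theta>^^i) (\<theta> x)) (drop i v)" by (rule Cons.IH)
    then show ?thesis using Suc by (simp add: funpow_swap1)
  qed
qed

lemma cyl_prefix: "cyl A \<theta> x (xs @ ys) \<subseteq> cyl A \<theta> x xs"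
  by (auto simp: cyl_def nth_append)

lemma pick_b:
  assumes "prob_space N" "sets N = sets SeqS" "finite F" "F \<noteq> {}"
    "measure N (cylset A \<theta> y F) \<ge> 1/2"
  shows "\<exists>b\<in>F. measure N (cyl A \<theta> y [b]) \<ge> 1 / (2 * card F)"
proof (rule ccontr)
  assume "\<not> ?thesis"
  then have lt: "\<And>b. b \<in> F \<Longrightarrow> measure N (cyl A \<theta> y [b]) < 1 / (2 * card F)" by auto
  have "cylset A \<theta> y F = (\<Union>b\<in>F. cyl A \<theta> y [b])" by (auto simp: cylset_def cyl_def)
  then have "measure N (cylset A \<theta> y F) \<le> (\<Sum>b\<in>F. measure N (cyl A \<theta> y [b]))"
    using assms(2,3) sets_cyl by (auto intro!: measure_UNION_le)
  also have "\<dots> < (\<Sum>b\<in>F. 1 / (2 * card F))" using assms(3,4) lt by (intro sum_strict_mono) auto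
  also have "\<dots> = 1/2" using assms(3,4) by simp
  finally show False using assms(5) by simp
qed

lemma succ_bound:
  assumes good: "good_pt M A \<theta> \<phi> \<nu> lam cf y"
    and Kb: "\<forall>a e. K a \<le> e \<longrightarrow> (\<forall>\<omega>\<in>cyl A \<theta> (\<theta> y) [e]. LopE A \<phi> y (\<lambda>_. 1) \<omega> \<le> ennreal (cf a / 2))"
    and cfp: "cf a > 0" and ab: "A y a b" and t: "\<tau> \<in> cyl A \<theta> (\<theta> y) [b]"
  shows "b < K a"
proof (rule ccontr)
  assume "\<not> b < K a"
  then have "K a \<le> b" by simp
  then have le: "LopE A \<phi> y (\<lambda>_. 1) \<tau> \<le> ennreal (cf a / 2)" using Kb[rule_format, of a b \<tau>] t by blast
  have t0: "\<tau> 0 = b" "\<tau> \<in> Einf A \<theta> (\<theta> y)" using t by (auto simp: cyl_def)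
  have "scons a \<tau> \<in> cyl A \<theta> y [a]" proof -
    have "scons a \<tau> \<in> Einf A \<theta> y" using t0 ab by (simp add: scons_Einf)
    then show ?thesis by (simp add: cyl_def scons_def)
  qed
  then have "cf a \<le> exp (\<phi> y (scons a \<tau>))" using good by (auto simp: good_pt_def)
  moreover have "ennreal (exp (\<phi> y (scons a \<tau>))) \<le> LopE A \<phi> y (\<lambda>_. 1) \<tau>"
    using t0 ab by (intro LopE_ge) simp
  ultimately have "ennreal (cf a) \<le> ennreal (cf a / 2)" using le
    by (meson ennreal_leI order_trans)
  then show False using cfp by (simp add: ennreal_le_iff)
qed

theorem lemma4p1:
  fixes M :: "'a measure" and \<theta> :: "'a \<Rightarrow> 'a" and A :: "'a \<Rightarrow> nat \<Rightarrow> nat \<Rightarrow> bool"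
    and \<alpha> :: real and \<phi> :: "'a \<Rightarrow> (nat \<Rightarrow> nat) \<Rightarrow> real" and \<kappa> :: real and F :: "nat set"
    and \<nu> :: "'a \<Rightarrow> (nat \<Rightarrow> nat) measure" and lam :: "'a \<Rightarrow> real"
  assumes "prob_space M" and "complete_measure M"
    and "\<theta> \<in> M \<rightarrow>\<^sub>M M" and "distr M M \<theta> = M" and "bij_betw \<theta> (space M) (space M)"
    and "inv_into (space M) \<theta> \<in> M \<rightarrow>\<^sub>M M"
    and "\<forall>i j. {x \<in> space M. A x i j} \<in> sets M"
    and "top_mixing A \<theta>"
    and "\<alpha> > 0"
    and "fine_potential M A \<theta> \<alpha> \<phi> \<kappa> F"
    and "fixed_conformal M A \<theta> \<phi> F \<nu> lam"
  shows "\<forall>D. finite D \<longrightarrow> (\<forall>n::nat. \<exists>\<beta>>0. (AE x in M. \<forall>k\<le>n. \<forall>w\<in>Dwords D A \<theta> x k.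
           measure (\<nu> x) (cyl A \<theta> x w) \<ge> \<beta>))"
proof (intro allI impI)
  fix D :: "nat set" and n :: nat
  assume finD: "finite D"
  note th = assms(3,4)
  have fin: "fine_potential M A \<theta> \<alpha> \<phi> \<kappa> F" and fc: "fixed_conformal M A \<theta> \<phi> F \<nu> lam" using assms by auto
  have cont: "\<forall>x\<in>space M. d_continuous_on (Einf A \<theta> x) (\<phi> x)"
    and cc: "\<forall>e. \<exists>c C. 0 < c \<and> c < C \<and> (AE x in M. \<forall>\<omega>\<in>cyl A \<theta> x [e]. c \<le> exp (\<phi> x \<omega>) \<and> exp (\<phi> x \<omega>) \<le> C)"
    and condB: "\<forall>\<epsilon>>0. \<exists>e0. \<forall>e\<ge>e0. (AE x in M. \<forall>\<omega>\<in>cyl A \<theta> (\<theta> x) [e]. LopE A \<phi> x (\<lambda>_. 1) \<omega> \<le> ennreal \<epsilon>)"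
    and finF: "finite F"
    using fin unfolding fine_potential_def summable_potential_def by blast+
  have nu: "\<forall>x\<in>space M. prob_space (\<nu> x) \<and> sets (\<nu> x) = sets SeqS"
    and lpos: "\<forall>x\<in>space M. 0 < lam x"
    and lnb: "\<exists>C. (AE x in M. \<bar>ln (lam x)\<bar> \<le> C)"
    and confAE: "AE x in M. \<forall>g. (\<exists>B. \<forall>\<omega>\<in>Einf A \<theta> x. \<bar>g \<omega>\<bar> \<le> B) \<longrightarrow> d_continuous_on (Einf A \<theta> x) g \<longrightarrow>
        (LINT \<omega>:Einf A \<theta> (\<theta> x)|\<nu> (\<theta> x). Lop A \<phi> x g \<omega>) = lam x * (LINT \<omega>:Einf A \<theta> x|\<nu> x. g \<omega>)"
    and halfAE: "AE x in M. measure (\<nu> x) (cylset A \<theta> x F) \<ge> 1/2"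
    using fc unfolding fixed_conformal_def by blast+
  obtain C where lnC: "AE x in M. \<bar>ln (lam x)\<bar> \<le> C" using lnb by blast
  obtain cf where cf: "\<And>e. 0 < cf e" "\<And>e. AE x in M. \<forall>\<omega>\<in>cyl A \<theta> x [e]. cf e \<le> exp (\<phi> x \<omega>)"
  proof -
    have "\<forall>e. \<exists>c. 0 < c \<and> (AE x in M. \<forall>\<omega>\<in>cyl A \<theta> x [e]. c \<le> exp (\<phi> x \<omega>))"
    proof
      fix e obtain c C' where "0 < c" "AE x in M. \<forall>\<omega>\<in>cyl A \<theta> x [e]. c \<le> exp (\<phi> x \<omega>) \<and> exp (\<phi> x \<omega>) \<le> C'"
        using cc by blast
      then show "\<exists>c. 0 < c \<and> (AE x in M. \<forall>\<omega>\<in>cyl A \<theta> x [e]. c \<le> exp (\<phi> x \<omega>))"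
        by (auto elim!: eventually_mono)
    qed
    from choice[OF this] obtain cf where "\<forall>e. 0 < cf e \<and> (AE x in M. \<forall>\<omega>\<in>cyl A \<theta> x [e]. cf e \<le> exp (\<phi> x \<omega>))" by blast
    then show ?thesis using that by blast
  qed
  obtain K where K: "\<And>a. \<forall>e\<ge>K a. (AE x in M. \<forall>\<omega>\<in>cyl A \<theta> (\<theta> x) [e]. LopE A \<phi> x (\<lambda>_. 1) \<omega> \<le> ennreal (cf a / 2))"
  proof -
    have "\<forall>a. \<exists>e0. \<forall>e\<ge>e0. (AE x in M. \<forall>\<omega>\<in>cyl A \<theta> (\<theta> x) [e]. LopE A \<phi> x (\<lambda>_. 1) \<omega> \<le> ennreal (cf a / 2))"
    proof
      fix a have "cf a / 2 > 0" using cf(1)[of a] by simp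
      then show "\<exists>e0. \<forall>e\<ge>e0. (AE x in M. \<forall>\<omega>\<in>cyl A \<theta> (\<theta> x) [e]. LopE A \<phi> x (\<lambda>_. 1) \<omega> \<le> ennreal (cf a / 2))"
        using condB by blast
    qed
    from choice[OF this] show ?thesis using that by blast
  qed
  have KAE: "AE x in M. \<forall>a e. K a \<le> e \<longrightarrow> (\<forall>\<omega>\<in>cyl A \<theta> (\<theta> x) [e]. LopE A \<phi> x (\<lambda>_. 1) \<omega> \<le> ennreal (cf a / 2))"
  proof -
    have "\<And>a e. AE x in M. K a \<le> e \<longrightarrow> (\<forall>\<omega>\<in>cyl A \<theta> (\<theta> x) [e]. LopE A \<phi> x (\<lambda>_. 1) \<omega> \<le> ennreal (cf a / 2))"
    proof -
      fix a e show "AE x in M. K a \<le> e \<longrightarrow> (\<forall>\<omega>\<in>cyl A \<theta> (\<theta> x) [e]. LopE A \<phi> x (\<lambda>_. 1) \<omega> \<le> ennreal (cf a / 2))"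
        using K[of a] by (cases "K a \<le> e") auto
    qed
    then show ?thesis by (simp add: AE_all_countable)
  qed
  have cfAE: "AE x in M. \<forall>e. \<forall>\<omega>\<in>cyl A \<theta> x [e]. cf e \<le> exp (\<phi> x \<omega>)"
    using cf(2) by (simp add: AE_all_countable)
  define Q where "Q y \<longleftrightarrow> good_pt M A \<theta> \<phi> \<nu> lam cf y \<and> \<bar>ln (lam y)\<bar> \<le> C
      \<and> measure (\<nu> y) (cylset A \<theta> y F) \<ge> 1/2
      \<and> (\<forall>a e. K a \<le> e \<longrightarrow> (\<forall>\<omega>\<in>cyl A \<theta> (\<theta> y) [e]. LopE A \<phi> y (\<lambda>_. 1) \<omega> \<le> ennreal (cf a / 2)))" for y
  have QAE: "AE y in M. Q y"
    using AE_space confAE cfAE KAE lnC halfAE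
  proof eventually_elim
    case (elim y) then show ?case using nu cont lpos by (simp add: Q_def good_pt_def)
  qed
  have QAll: "AE x in M. \<forall>j. Q ((\<theta>^^j) x)" by (rule AE_shift_all[OF th QAE])
  have Fne: "F \<noteq> {}"
  proof
    assume "F = {}"
    then have "AE x in M. False" using halfAE by (auto simp: cylset_def)
    then show False using assms(1) by (simp add: prob_space.AE_False)
  qed
  have lamQ: "0 < lam y' \<and> lam y' \<le> exp C" if "Q y'" for y'
  proof -
    have p: "0 < lam y'" and l: "\<bar>ln (lam y')\<bar> \<le> C" using that by (auto simp: Q_def good_pt_def)
    have "lam y' = exp (ln (lam y'))" using p by simp
    also have "\<dots> \<le> exp C" using l by simp
    finally show ?thesis using p by simp
  qed
  have "\<forall>a. \<exists>g. \<forall>b. \<forall>n'\<ge>g b. \<forall>x. \<exists>w. length w = Suc n' \<and> a # w @ [b] \<in> Ewords A \<theta> x (Suc (Suc n'))"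
  proof
    fix a
    have "\<forall>b. \<exists>N. \<forall>n'\<ge>N. \<forall>x. \<exists>w. length w = Suc n' \<and> a # w @ [b] \<in> Ewords A \<theta> x (Suc (Suc n'))"
      using assms(8) unfolding top_mixing_def by blast
    then show "\<exists>g. \<forall>b. \<forall>n'\<ge>g b. \<forall>x. \<exists>w. length w = Suc n' \<and> a # w @ [b] \<in> Ewords A \<theta> x (Suc (Suc n'))"
      by (rule choice)
  qed
  from choice[OF this] obtain Nf where Nf:
    "\<forall>a b. \<forall>n'\<ge>Nf a b. \<forall>x. \<exists>w. length w = Suc n' \<and> a # w @ [b] \<in> Ewords A \<theta> x (Suc (Suc n'))"
    by blast
  define Nm where "Nm = Max (insert 0 ((\<lambda>(a,b). Nf a b) ` (D \<times> F)))"
  have mix: "\<exists>w. length w = Suc Nm \<and> a # w @ [b] \<in> Ewords A \<theta> z (Suc (Suc Nm))"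
    if "a \<in> D" "b \<in> F" for a b z
  proof -
    have "Nf a b \<in> (\<lambda>(a,b). Nf a b) ` (D \<times> F)" using that by force
    then have "Nf a b \<le> Nm" unfolding Nm_def using finD finF by (intro Max_ge) auto
    then show ?thesis using Nf by blast
  qed
  define Bs where "Bs = rec_nat D (\<lambda>_ S. S \<union> (\<Union>a\<in>S. {..<K a}))"
  have Bs0: "Bs 0 = D" and BsS: "\<And>j. Bs (Suc j) = Bs j \<union> (\<Union>a\<in>Bs j. {..<K a})" by (simp_all add: Bs_def)
  have Bsfin: "finite (Bs j)" for j by (induction j) (simp_all add: Bs0 BsS finD)
  have Bsmono: "Bs i \<subseteq> Bs j" if "i \<le> j" for i j
  proof -
    have "\<And>m. Bs m \<le> Bs (Suc m)" by (simp add: BsS)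
    then show ?thesis using lift_Suc_mono_le[of Bs i j] that by blast
  qed
  define T where "T = n + Nm + 2"
  define c0 where "c0 = Min (insert 1 (cf ` Bs T))"
  have c0p: "0 < c0" unfolding c0_def using Bsfin[of T] cf(1) by (simp add: Min_gr_iff)
  define r where "r = min 1 (c0 / exp C)"
  have rp: "0 < r" "r \<le> 1" using c0p by (auto simp: r_def)
  define \<beta> where "\<beta> = r^T / (2 * card F)"
  have cardF: "card F > 0" using finF Fne by (simp add: card_gt_0_iff)
  have \<beta>p: "\<beta> > 0" using rp cardF by (simp add: \<beta>_def)
  show "\<exists>\<beta>>0. (AE x in M. \<forall>k\<le>n. \<forall>w\<in>Dwords D A \<theta> x k. measure (\<nu> x) (cyl A \<theta> x w) \<ge> \<beta>)"
  proof (intro exI[of _ \<beta>] conjI \<beta>p)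
    show "AE x in M. \<forall>k\<le>n. \<forall>w\<in>Dwords D A \<theta> x k. measure (\<nu> x) (cyl A \<theta> x w) \<ge> \<beta>"
      using QAll
    proof eventually_elim
      case (elim x)
      then have Qx: "\<And>j. Q ((\<theta>^^j) x)" by blast
      have goodx: "\<And>j. good_pt M A \<theta> \<phi> \<nu> lam cf ((\<theta>^^j) x)" using Qx by (simp add: Q_def)
      show ?case
      proof (intro allI impI ballI)
        fix k \<omega> assume k: "k \<le> n" and \<omega>: "\<omega> \<in> Dwords D A \<theta> x k"
        have \<omega>l: "length \<omega> = Suc k" "adm_word A \<theta> x \<omega>" "set \<omega> \<subseteq> D"
          using \<omega> by (auto simp: Dwords_def Ewords_def)
        define L where "L = k + Nm + 2"
        define y where "y = (\<theta>^^L) x"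
        have Qy: "Q y" using Qx by (simp add: y_def)
        obtain b where b: "b \<in> F" "measure (\<nu> y) (cyl A \<theta> y [b]) \<ge> 1 / (2 * card F)"
        proof -
          have "prob_space (\<nu> y)" "sets (\<nu> y) = sets SeqS" "measure (\<nu> y) (cylset A \<theta> y F) \<ge> 1/2"
            using Qy unfolding Q_def good_pt_def by blast+
          then show ?thesis using pick_b[of "\<nu> y" F A \<theta> y] finF Fne that by blast
        qed
        have \<omega>k: "\<omega> ! k \<in> D" using \<omega>l by (auto dest: nth_mem)
        obtain w where w: "length w = Suc Nm" "\<omega> ! k # w @ [b] \<in> Ewords A \<theta> ((\<theta>^^k) x) (Suc (Suc Nm))"
          using mix[OF \<omega>k b(1)] by blast
        define u where "u = \<omega> @ w @ [b]"
        have \<omega>split: "\<omega> = take k \<omega> @ [\<omega> ! k]"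
          using \<omega>l(1) take_Suc_conv_app_nth[of k \<omega>] by simp
        have admu: "adm_word A \<theta> x u"
        proof -
          have "adm_word A \<theta> x (take k \<omega> @ \<omega> ! k # w @ [b])"
          proof (rule adm_append)
            show "adm_word A \<theta> x (take k \<omega> @ [\<omega> ! k])" using \<omega>l(2) \<omega>split by simp
            have "length (take k \<omega>) = k" using \<omega>l(1) by simp
            then show "adm_word A \<theta> ((\<theta> ^^ length (take k \<omega>)) x) (\<omega> ! k # w @ [b])"
              using w(2) by (simp add: Ewords_def)
          qed
          then show ?thesis unfolding u_def by (subst \<omega>split) simp
        qed
        have lenu: "length u = Suc L" using \<omega>l w by (simp add: u_def L_def)
        have lastu: "last u = b" by (simp add: u_def)
        have cylpos: "0 < measure (\<nu> ((\<theta>^^j) x)) (cyl A \<theta> ((\<theta>^^j) x) (drop j u))" if jL: "j \<le> L" for j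
        proof -
          define z where "z = (\<theta>^^j) x"
          define r' where "r' = Min (insert 1 (cf ` set u)) / exp C"
          have r'p: "0 < r'" unfolding r'_def using cf(1) by (simp add: Min_gr_iff)
          have goodz: "\<forall>i. good_pt M A \<theta> \<phi> \<nu> lam cf ((\<theta>^^i) z)"
            using goodx unfolding z_def by (metis funpow_add comp_apply)
          have dne: "drop j u \<noteq> []" using jL lenu by simp
          have admd: "adm_word A \<theta> z (drop j u)" unfolding z_def by (rule adm_drop[OF admu])
          have rle: "\<forall>i. Suc i < length (drop j u) \<longrightarrow> r' \<le> cf (drop j u ! i) / lam ((\<theta>^^i) z)"
          proof (intro allI impI)
            fix i assume i: "Suc i < length (drop j u)"
            have mem: "drop j u ! i \<in> set u" using i by (metis in_set_dropD nth_mem Suc_lessD)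
            have "Min (insert 1 (cf ` set u)) \<le> cf (drop j u ! i)" using mem by (intro Min_le) auto
            moreover have lz: "0 < lam ((\<theta>^^i) z) \<and> lam ((\<theta>^^i) z) \<le> exp C"
              using lamQ Qx unfolding z_def by (metis funpow_add comp_apply)
            moreover have "0 < Min (insert 1 (cf ` set u))" using cf(1) by (simp add: Min_gr_iff)
            ultimately show "r' \<le> cf (drop j u ! i) / lam ((\<theta>^^i) z)" unfolding r'_def
              by (meson frac_le less_eq_real_def order_trans)
          qed
          have ch: "r'^(length (drop j u) - 1) * measure (\<nu> ((\<theta>^^(length (drop j u) - 1)) z))
              (cyl A \<theta> ((\<theta>^^(length (drop j u) - 1)) z) [last (drop j u)]) \<le> measure (\<nu> z) (cyl A \<theta> z (drop j u))"
            by (rule chain[OF goodz _ admd dne _ rle]) (use cf(1) r'p in auto)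
          have e1: "(\<theta>^^(length (drop j u) - 1)) z = y"
          proof -
            have "length (drop j u) - 1 = L - j" using lenu by simp
            moreover have "(\<theta>^^(L-j)) ((\<theta>^^j) x) = (\<theta>^^(L-j+j)) x" by (simp only: funpow_add comp_apply)
            ultimately show ?thesis using jL unfolding z_def y_def by simp
          qed
          have e2: "last (drop j u) = b" using dne lastu by simp
          have "0 < 1 / (2 * real (card F))" using cardF by simp
          then have "0 < measure (\<nu> y) (cyl A \<theta> y [b])" using b(2) by linarith
          then have "0 < r'^(length (drop j u) - 1) * measure (\<nu> y) (cyl A \<theta> y [b])" using r'p by simp
          then show ?thesis using ch e1 e2 unfolding z_def by simp
        qed
        have succ: "u ! Suc j < K (u ! j)" if jL: "j < L" for j
        proof -
          define z where "z = (\<theta>^^j) x"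
          have Qz: "Q z" using Qx by (simp add: z_def)
          have gz: "good_pt M A \<theta> \<phi> \<nu> lam cf z" using Qz by (simp add: Q_def)
          have Kz: "\<forall>a e. K a \<le> e \<longrightarrow> (\<forall>\<omega>\<in>cyl A \<theta> (\<theta> z) [e]. LopE A \<phi> z (\<lambda>_. 1) \<omega> \<le> ennreal (cf a / 2))"
            using Qz unfolding Q_def by blast
          have Az: "A z (u ! j) (u ! Suc j)" using admu jL lenu unfolding adm_word_def z_def by simp
          have "0 < measure (\<nu> ((\<theta>^^Suc j) x)) (cyl A \<theta> ((\<theta>^^Suc j) x) (drop (Suc j) u))"
            using jL by (intro cylpos) simp
          then obtain \<tau> where \<tau>: "\<tau> \<in> cyl A \<theta> ((\<theta>^^Suc j) x) (drop (Suc j) u)"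
            by (metis equals0I measure_empty less_irrefl)
          have "\<tau> \<in> cyl A \<theta> (\<theta> z) [u ! Suc j]"
            using \<tau> jL lenu unfolding z_def by (auto simp: cyl_def)
          then show ?thesis by (rule succ_bound[OF gz Kz cf(1) Az])
        qed
        have letters: "u ! j \<in> Bs j" if "j \<le> L" for j
          using that
        proof (induction j)
          case 0
          have "u ! 0 = \<omega> ! 0" using \<omega>l(1) by (simp add: u_def nth_append)
          then show ?case using \<omega>l by (auto simp: Bs0 dest: nth_mem)
        next
          case (Suc j)
          then have "u ! j \<in> Bs j" "u ! Suc j < K (u ! j)" using succ by auto
          then show ?case by (auto simp: BsS)
        qed
        have rle: "\<forall>i. Suc i < length u \<longrightarrow> r \<le> cf (u ! i) / lam ((\<theta>^^i) x)"
        proof (intro allI impI)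
          fix i assume i: "Suc i < length u"
          have "u ! i \<in> Bs T" using letters[of i] Bsmono[of i T] i lenu k by (auto simp: T_def L_def)
          then have "c0 \<le> cf (u ! i)" unfolding c0_def using Bsfin[of T] by (intro Min_le) auto
          moreover have "0 < lam ((\<theta>^^i) x) \<and> lam ((\<theta>^^i) x) \<le> exp C" using lamQ Qx by blast
          moreover have "r \<le> c0 / exp C" by (simp add: r_def)
          ultimately show "r \<le> cf (u ! i) / lam ((\<theta>^^i) x)" using c0p
            by (meson frac_le less_eq_real_def order_trans)
        qed
        have ch: "r^(length u - 1) * measure (\<nu> ((\<theta>^^(length u - 1)) x)) (cyl A \<theta> ((\<theta>^^(length u - 1)) x) [last u])
            \<le> measure (\<nu> x) (cyl A \<theta> x u)"
          by (rule chain[OF allI[OF goodx] _ admu _ _ rle]) (use cf(1) rp lenu in auto)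
        then have ch': "r^L * measure (\<nu> y) (cyl A \<theta> y [b]) \<le> measure (\<nu> x) (cyl A \<theta> x u)"
          using lenu lastu by (simp add: y_def)
        have px: "prob_space (\<nu> x)" "sets (\<nu> x) = sets SeqS" using goodx[of 0] by (auto simp: good_pt_def)
        have mono: "measure (\<nu> x) (cyl A \<theta> x u) \<le> measure (\<nu> x) (cyl A \<theta> x \<omega>)"
          unfolding u_def using px sets_cyl[of A \<theta> x \<omega>] cyl_prefix[of A \<theta> x \<omega> "w @ [b]"]
          by (intro finite_measure.finite_measure_mono prob_space.finite_measure) auto
        have "r^T \<le> r^L" using rp k by (intro power_decreasing) (auto simp: T_def L_def)
        then have "\<beta> \<le> r^L * (1 / (2 * card F))" using cardF by (simp add: \<beta>_def divide_right_mono)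
        also have "\<dots> \<le> r^L * measure (\<nu> y) (cyl A \<theta> y [b])" using b(2) rp by (intro mult_left_mono) auto
        finally show "\<beta> \<le> measure (\<nu> x) (cyl A \<theta> x \<omega>)" using ch' mono by linarith
      qed
    qed
  qed
qed

end
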